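(* Let $\mu,\psi,x>0$. If $$x>\frac{1}{2\sqrt2}-\frac{1+\sqrt2}{2\sqrt2}\,\frac{\log(2\psi\mu^2)}{\psi},$$ then $$e^{-\psi x}<\frac{\mu}{\sqrt{x+\frac12}}.$$ *)

theory Defs
  imports Complex_Main
begin

end

theory Submission
  imports Defs
begin

lemma ln_bound: fixes s :: real assumes "s > 0" shows "ln s < (sqrt 2 - 1) * s"
proof -
  have e: "exp 1 \<ge> (5/2::real)"
    using exp_ge_add_one_self[of 1] exp_lower_Taylor_quadratic[of 1] by simp
  have "ln (s / exp 1) \<le> s / exp 1 - 1" using assms by (intro ln_le_minus_one) simp
  hence l: "ln s \<le> s / exp 1" using assms by (simp add: ln_div)
  have r: "sqrt 2 > (7/5::real)"
    by (rule real_less_rsqrt) (simp add: power2_eq_square)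
  have "s / exp 1 \<le> s / (5/2)" using e assms by (intro divide_left_mono) auto
  also have "\<dots> < (sqrt 2 - 1) * s" using r assms by simp
  finally show ?thesis using l by simp
qed

theorem mainTheorem19:
  fixes \<mu> \<psi> x :: real
  assumes "\<mu> > 0" and "\<psi> > 0" and "x > 0"
    and "x > 1 / (2 * sqrt 2) - (1 + sqrt 2) / (2 * sqrt 2) * (ln (2 * \<psi> * \<mu>^2) / \<psi>)"
  shows "exp (- \<psi> * x) < \<mu> / sqrt (x + 1/2)"
proof -
  define r where "r = sqrt (2::real)"
  define L where "L = ln (2 * \<psi> * \<mu>^2)"
  have r2: "r * r = 2" unfolding r_def by simp
  have rp: "r > 0" unfolding r_def by simp
  have A: "x > 1 / (2 * r) - (1 + r) / (2 * r) * (L / \<psi>)" using assms(4) unfolding r_def L_def .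
  have "2 * r * \<psi> * x > 2 * r * \<psi> * (1 / (2 * r) - (1 + r) / (2 * r) * (L / \<psi>))"
    using A rp assms(2) by simp
  also have "2 * r * \<psi> * (1 / (2 * r) - (1 + r) / (2 * r) * (L / \<psi>)) = \<psi> - (1 + r) * L"
    using rp assms(2) by (simp add: field_simps)
  finally have B: "(1 + r) * L > \<psi> - 2 * r * \<psi> * x" by simp
  have "(1 + r) * ((r - 1) * (\<psi> + 2 * \<psi> * x) - 2 * \<psi> * x) = \<psi> - 2 * r * \<psi> * x"
    using r2 by (simp add: algebra_simps)
  with B have "(1 + r) * L > (1 + r) * ((r - 1) * (\<psi> + 2 * \<psi> * x) - 2 * \<psi> * x)" by simp
  hence C: "L > (r - 1) * (\<psi> + 2 * \<psi> * x) - 2 * \<psi> * x" using rp by simp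
  have s: "\<psi> + 2 * \<psi> * x > 0" using assms by (simp add: add_pos_pos)
  have D: "ln (\<psi> + 2 * \<psi> * x) < (r - 1) * (\<psi> + 2 * \<psi> * x)"
    using ln_bound[OF s] unfolding r_def .
  have "\<psi> + 2 * \<psi> * x = 2 * \<psi> * (x + 1/2)" by (simp add: algebra_simps)
  hence E: "ln (\<psi> + 2 * \<psi> * x) = ln 2 + ln \<psi> + ln (x + 1/2)"
    using assms by (simp add: ln_mult)
  have F: "L = ln 2 + ln \<psi> + 2 * ln \<mu>"
    unfolding L_def using assms by (simp add: ln_mult ln_realpow)
  have G: "ln (x + 1/2) - 2 * \<psi> * x < 2 * ln \<mu>" using C D E F by linarith
  have xp: "x + 1/2 > 0" using assms by simp
  have "ln (exp (- \<psi> * x) * sqrt (x + 1/2)) = - \<psi> * x + ln (x + 1/2) / 2"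
    using xp by (simp add: ln_mult ln_sqrt)
  also have "\<dots> < ln \<mu>" using G by simp
  finally have "exp (- \<psi> * x) * sqrt (x + 1/2) < \<mu>"
    using xp assms(1) by (simp add: ln_less_cancel_iff)
  thus ?thesis using xp by (simp add: field_simps)
qed

end
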